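(* For all $\tau\in\mathbb{H}$, \[ T_1(\tau)\bigl(T_1(\tau)+T_2(\tau)\bigr)\bigl(1+T_2^2(\tau)\bigr)=T_2(\tau)\bigl(1+T_1(\tau)T_2(\tau)\bigr)\bigl(1+T_1^2(\tau)\bigr). \]
   Context: $q=e^{2\pi i\tau}$, $(a;q)_\infty=\prod_{n\ge0}(1-aq^n)$. Define $T_1(\tau)=\dfrac{(-q;q^5)_\infty(-q^4;q^5)_\infty-(q;q^5)_\infty(q^4;q^5)_\infty}{(-q;q^5)_\infty(-q^4;q^5)_\infty+(q;q^5)_\infty(q^4;q^5)_\infty}$ and $T_2(\tau)=\dfrac{(-q^2;q^5)_\infty(-q^3;q^5)_\infty-(q^2;q^5)_\infty(q^3;q^5)_\infty}{(-q^2;q^5)_\infty(-q^3;q^5)_\infty+(q^2;q^5)_\infty(q^3;q^5)_\infty}$. *)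

theory Defs
  imports "HOL-Analysis.Analysis"
begin

definition qpoch :: "complex \<Rightarrow> complex \<Rightarrow> complex" where
  "qpoch a q = (\<Prod>n. (1 - a * q ^ n))"

definition nome :: "complex \<Rightarrow> complex" where
  "nome \<tau> = exp (2 * pi * \<i> * \<tau>)"

definition T1num :: "complex \<Rightarrow> complex" where
  "T1num \<tau> = (let q = nome \<tau> in
     qpoch (-q) (q^5) * qpoch (-(q^4)) (q^5) - qpoch q (q^5) * qpoch (q^4) (q^5))"
definition T1den :: "complex \<Rightarrow> complex" where
  "T1den \<tau> = (let q = nome \<tau> in
     qpoch (-q) (q^5) * qpoch (-(q^4)) (q^5) + qpoch q (q^5) * qpoch (q^4) (q^5))"
definition T2num :: "complex \<Rightarrow> complex" where
  "T2num \<tau> = (let q = nome \<tau> in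
     qpoch (-(q^2)) (q^5) * qpoch (-(q^3)) (q^5) - qpoch (q^2) (q^5) * qpoch (q^3) (q^5))"
definition T2den :: "complex \<Rightarrow> complex" where
  "T2den \<tau> = (let q = nome \<tau> in
     qpoch (-(q^2)) (q^5) * qpoch (-(q^3)) (q^5) + qpoch (q^2) (q^5) * qpoch (q^3) (q^5))"

definition T1 :: "complex \<Rightarrow> complex" where "T1 \<tau> = T1num \<tau> / T1den \<tau>"
definition T2 :: "complex \<Rightarrow> complex" where "T2 \<tau> = T2num \<tau> / T2den \<tau>"

end

theory Submission
  imports Defs "HOL-Library.Nat_Bijection"
begin

lemma summ_nat_geom:
  fixes r :: real assumes "0 \<le> r" "r < 1"
  shows "(\<lambda>n::nat. r ^ n) summable_on UNIV"
  by (rule norm_summable_imp_summable_on) (use assms in \<open>auto intro!: summable_geometric\<close>)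

lemma summ_int_geom:
  fixes r :: real assumes "0 \<le> r" "r < 1"
  shows "(\<lambda>n::int. r ^ nat \<bar>n\<bar>) summable_on UNIV"
proof -
  have U: "(UNIV::int set) = range int \<union> range (\<lambda>n. - int (Suc n))"
  proof -
    have "x \<in> range int \<union> range (\<lambda>n. - int (Suc n))" for x :: int
    proof (cases "x \<ge> 0")
      case True then show ?thesis by (metis UnI1 nonneg_int_cases rangeI)
    next
      case False
      then have "x = - int (Suc (nat (-x - 1)))" by simp
      then show ?thesis by blast
    qed
    then show ?thesis by blast
  qed
  have 1: "(\<lambda>n::int. r ^ nat \<bar>n\<bar>) summable_on range int"
    by (subst summable_on_reindex) (auto simp: o_def intro: summ_nat_geom assms)
  have 2: "(\<lambda>n::int. r ^ nat \<bar>n\<bar>) summable_on range (\<lambda>n. - int (Suc n))"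
  proof (subst summable_on_reindex)
    show "inj_on (\<lambda>n. - int (Suc n)) UNIV" by (auto simp: inj_on_def)
    have "(\<lambda>n. r * r ^ n) summable_on UNIV" 
      by (intro summable_on_cmult_right summ_nat_geom assms)
    then show "((\<lambda>n::int. r ^ nat \<bar>n\<bar>) \<circ> (\<lambda>n. - int (Suc n))) summable_on UNIV"
      by (simp add: o_def nat_add_distrib)
  qed
  show ?thesis unfolding U by (intro summable_on_Un_disjoint 1 2) auto
qed

lemma summ_int_quad:
  fixes r :: real assumes "0 < r" "r < 1" and e: "\<And>n. e n \<ge> \<bar>n\<bar> - C"
  shows "(\<lambda>n::int. r powi e n) summable_on UNIV"
proof (rule summable_on_comparison_test)
  show "(\<lambda>n::int. r powi (-C) * r ^ nat \<bar>n\<bar>) summable_on UNIV"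
    by (intro summable_on_cmult_right summ_int_geom) (use assms in auto)
  fix n :: int
  have "r powi e n \<le> r powi (\<bar>n\<bar> - C)"
    by (rule power_int_decreasing) (use assms e in auto)
  also have "\<dots> = r powi (-C) * r ^ nat \<bar>n\<bar>"
    using assms by (simp add: power_int_add[symmetric] power_int_nonneg_exp[symmetric] algebra_simps)
  finally show "r powi e n \<le> r powi (-C) * r ^ nat \<bar>n\<bar>" .
qed (use assms in auto)

lemma qpoch_conv:
  fixes Q a :: complex assumes "norm Q < 1"
  shows "convergent_prod (\<lambda>n. 1 - a * Q ^ n)"
proof (rule abs_convergent_prod_imp_convergent_prod, rule summable_imp_abs_convergent_prod)
  have "summable (\<lambda>n. norm a * norm Q ^ n)"
    using assms by (intro summable_mult summable_geometric) auto
  then show "summable (\<lambda>n. norm (1 - a * Q ^ n - 1))"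
    by (simp add: norm_mult norm_power)
qed

lemma qpoch_lim:
  fixes Q a :: complex assumes "norm Q < 1"
  shows "(\<lambda>n. \<Prod>k<n. (1 - a * Q ^ k)) \<longlonglongrightarrow> qpoch a Q"
  unfolding qpoch_def LIMSEQ_lessThan_iff_atMost
  by (rule convergent_prod_LIMSEQ[OF qpoch_conv[OF assms]])

lemma qpoch_nz:
  fixes Q a :: complex assumes "norm Q < 1" "\<And>n. a * Q ^ n \<noteq> 1"
  shows "qpoch a Q \<noteq> 0"
  unfolding qpoch_def using assms qpoch_conv[OF assms(1)]
  by (intro prodinf_nonzero) auto

lemma qpoch_split:
  fixes Q a :: complex assumes "norm Q < 1"
  shows "qpoch a Q = qpoch a (Q^2) * qpoch (a * Q) (Q^2)"
proof -
  have Q2: "norm (Q^2) < 1" using assms by (simp add: norm_power power_less_one_iff)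
  have "(\<lambda>n. (\<Prod>k<n. (1 - a * (Q^2) ^ k)) * (\<Prod>k<n. (1 - (a*Q) * (Q^2) ^ k)))
        \<longlonglongrightarrow> qpoch a (Q^2) * qpoch (a * Q) (Q^2)"
    by (intro tendsto_mult qpoch_lim Q2)
  moreover have "(\<Prod>k<n. (1 - a * (Q^2) ^ k)) * (\<Prod>k<n. (1 - (a*Q) * (Q^2) ^ k))
       = (\<Prod>k<n*2. (1 - a * Q ^ k))" for n
  proof -
    have "(\<Prod>k<n*2. (1 - a * Q ^ k)) = (\<Prod>m<n. \<Prod>k\<in>{m*2..<m*2+2}. (1 - a * Q ^ k))"
      by (rule prod.nat_group[symmetric])
    also have "\<dots> = (\<Prod>m<n. (1 - a * (Q^2) ^ m) * (1 - (a*Q) * (Q^2) ^ m))"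
    proof (rule prod.cong[OF refl])
      fix m
      have "{m*2..<m*2+2} = {m*2, Suc (m*2)}" by auto
      moreover have e: "(Q^2)^m = Q^(m*2)" by (metis power_mult mult.commute)
      ultimately show "(\<Prod>k\<in>{m*2..<m*2+2}. (1 - a * Q ^ k)) = (1 - a * (Q^2) ^ m) * (1 - (a*Q) * (Q^2) ^ m)"
        by (simp add: e mult_ac)
    qed
    also have "\<dots> = (\<Prod>k<n. (1 - a * (Q^2) ^ k)) * (\<Prod>k<n. (1 - (a*Q) * (Q^2) ^ k))"
      by (rule prod.distrib)
    finally show ?thesis by simp
  qed
  ultimately have "(\<lambda>n. (\<Prod>k<n*2. (1 - a * Q ^ k))) \<longlonglongrightarrow> qpoch a (Q^2) * qpoch (a * Q) (Q^2)"
    by simp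
  moreover have "(\<lambda>n. (\<Prod>k<n*2. (1 - a * Q ^ k))) \<longlonglongrightarrow> qpoch a Q"
  proof -
    have "strict_mono (\<lambda>n::nat. n*2)" by (auto simp: strict_mono_def)
    from LIMSEQ_subseq_LIMSEQ[OF qpoch_lim[OF assms] this] show ?thesis by (simp add: o_def)
  qed
  ultimately show ?thesis using LIMSEQ_unique by blast
qed

fun gb :: "complex \<Rightarrow> nat \<Rightarrow> nat \<Rightarrow> complex" where
  "gb q N 0 = 1"
| "gb q 0 (Suc j) = 0"
| "gb q (Suc N) (Suc j) = gb q N j + q ^ Suc j * gb q N (Suc j)"

lemma gb_zero: "N < j \<Longrightarrow> gb q N j = 0"
proof (induction N arbitrary: j)
  case 0 then show ?case by (cases j) auto
next
  case (Suc N) then show ?case by (cases j) auto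
qed

lemma tri_Suc: "Suc j * j div 2 = j * (j - 1) div 2 + j"
proof (cases j)
  case (Suc k)
  have "Suc (Suc k) * Suc k = Suc k * k + 2 * Suc k" by (simp add: algebra_simps)
  then show ?thesis using Suc by simp
qed simp

lemma tri2: "(x + x * x) div 2 = (x * x - x) div 2 + (x::nat)"
proof -
  have "x + x * x = (x * x - x) + 2 * x" by (cases x) auto
  moreover have "((x * x - x) + 2 * x) div 2 = (x * x - x) div 2 + x" by presburger
  ultimately show ?thesis by simp
qed

lemma cauchy_fin:
  "(\<Prod>k<N. (1 + x * q ^ k)) = (\<Sum>j\<le>N. gb q N j * q ^ (j * (j - 1) div 2) * x ^ j)"
proof (induction N arbitrary: x)
  case 0 then show ?case by simp
next
  case (Suc N)
  define S where "S j = gb q N j * q ^ (j * (j - 1) div 2 + j) * x ^ j" for j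
  have IH: "(\<Prod>k<N. (1 + (x*q) * q ^ k)) = (\<Sum>j\<le>N. S j)"
    unfolding Suc S_def by (simp add: power_mult_distrib power_add mult_ac)
  have "(\<Prod>k<Suc N. (1 + x * q ^ k)) = (1 + x) * (\<Prod>k<N. (1 + (x*q) * q ^ k))"
    by (subst prod.lessThan_Suc_shift) (simp add: mult_ac)
  also have "\<dots> = (1 + x) * (\<Sum>j\<le>N. S j)" by (simp add: IH)
  finally have L: "(\<Prod>k<Suc N. (1 + x * q ^ k)) = (1 + x) * (\<Sum>j\<le>N. S j)" .
  have "(\<Sum>j\<le>Suc N. gb q (Suc N) j * q ^ (j * (j - 1) div 2) * x ^ j)
      = 1 + (\<Sum>j\<le>N. gb q (Suc N) (Suc j) * q ^ (Suc j * j div 2) * x ^ Suc j)"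
    by (subst sum.atMost_Suc_shift) simp
  also have "\<dots> = 1 + (\<Sum>j\<le>N. x * S j + S (Suc j))"
    by (intro arg_cong[where f="\<lambda>t. 1 + t"] sum.cong refl)
       (simp add: S_def tri2 algebra_simps power_add)
  also have "\<dots> = 1 + x * (\<Sum>j\<le>N. S j) + (\<Sum>j\<le>N. S (Suc j))"
    by (simp add: sum.distrib sum_distrib_left)
  also have "(\<Sum>j\<le>N. S (Suc j)) = (\<Sum>j\<le>N. S j) - 1"
  proof -
    have "(\<Sum>j\<le>Suc N. S j) = S 0 + (\<Sum>j\<le>N. S (Suc j))" by (rule sum.atMost_Suc_shift)
    moreover have "(\<Sum>j\<le>Suc N. S j) = (\<Sum>j\<le>N. S j)" by (simp add: S_def gb_zero)
    moreover have "S 0 = 1" by (simp add: S_def)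
    ultimately show ?thesis by (simp add: algebra_simps)
  qed
  finally show ?case using L by (simp add: algebra_simps)
qed

definition pp :: "'a::comm_ring_1 \<Rightarrow> nat \<Rightarrow> 'a" where
  "pp q n = (\<Prod>k<n. (1 - q ^ Suc k))"

lemma pp_Suc: "pp q (Suc n) = pp q n * (1 - q ^ Suc n)"
  by (simp add: pp_def)

lemma gb_pp: "j \<le> N \<Longrightarrow> gb q N j * pp q j * pp q (N - j) = pp q N"
proof (induction N arbitrary: j)
  case 0 then show ?case by (simp add: pp_def)
next
  case (Suc N)
  show ?case
  proof (cases j)
    case 0 then show ?thesis by (simp add: pp_def)
  next
    case (Suc i)
    with Suc.prems have iN: "i \<le> N" by simp
    have T1: "gb q N i * pp q (Suc i) * pp q (N - i) = (1 - q ^ Suc i) * pp q N"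
      using Suc.IH[OF iN] by (simp add: pp_Suc mult_ac)
    have T2: "q ^ Suc i * gb q N (Suc i) * pp q (Suc i) * pp q (N - i)
              = q ^ Suc i * (1 - q ^ (N - i)) * pp q N"
    proof (cases "i = N")
      case True then show ?thesis by (simp add: gb_zero)
    next
      case False
      then have iN': "Suc i \<le> N" using iN by simp
      have e: "N - i = Suc (N - Suc i)" using iN' by simp
      have "q ^ Suc i * gb q N (Suc i) * pp q (Suc i) * pp q (N - i)
          = q ^ Suc i * (1 - q ^ (N - i)) * (gb q N (Suc i) * pp q (Suc i) * pp q (N - Suc i))"
        by (subst (1) e, subst pp_Suc) (simp add: e[symmetric] mult_ac)
      also have "\<dots> = q ^ Suc i * (1 - q ^ (N - i)) * pp q N" using Suc.IH[OF iN'] by simp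
      finally show ?thesis .
    qed
    have pw: "q ^ Suc i * q ^ (N - i) = q ^ Suc N"
      using iN by (simp add: power_add[symmetric])
    have "gb q (Suc N) j * pp q j * pp q (Suc N - j)
        = gb q N i * pp q (Suc i) * pp q (N - i) + q ^ Suc i * gb q N (Suc i) * pp q (Suc i) * pp q (N - i)"
      using Suc by (simp add: algebra_simps)
    also have "\<dots> = pp q N * (1 - q ^ Suc N)"
      unfolding T1 T2 using iN by (simp add: algebra_simps power_add[symmetric])
    also have "\<dots> = pp q (Suc N)" by (simp add: pp_Suc)
    finally show ?thesis .
  qed
qed

lemma rp_le: "0 \<le> r \<Longrightarrow> r \<le> 1 \<Longrightarrow> r * r ^ a \<le> (1::real)"
  by (metis power_Suc power_le_one)

lemma rp_less: "0 \<le> r \<Longrightarrow> r < 1 \<Longrightarrow> r * r ^ a < (1::real)"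
proof -
  assume r: "0 \<le> r" "r < 1"
  have "r ^ a \<le> 1" using r by (intro power_le_one) auto
  then have "r * r ^ a \<le> r" using r by (intro mult_left_le) auto
  with r show ?thesis by simp
qed

lemma pp_nonneg: "0 \<le> r \<Longrightarrow> r \<le> (1::real) \<Longrightarrow> 0 \<le> pp r n"
  unfolding pp_def by (intro prod_nonneg) (auto simp: rp_le)

lemma gb_bound_aux:
  fixes q :: complex
  assumes "norm q < 1"
  shows "norm (gb q N j) * pp (norm q) j \<le> 1"
proof (induction N arbitrary: j)
  case 0 then show ?case by (cases j) (auto simp: pp_def)
next
  case (Suc N)
  show ?case
  proof (cases j)
    case 0 then show ?thesis by (simp add: pp_def)
  next
    case (Suc i)
    define r where "r = norm q"
    have r: "0 \<le> r" "r < 1" using assms by (auto simp: r_def)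
    have ri: "0 \<le> 1 - r ^ Suc i" using r by (simp add: rp_le)
    have "norm (gb q (Suc N) j) \<le> norm (gb q N i) + r ^ Suc i * norm (gb q N (Suc i))"
      using Suc by (simp add: r_def norm_power norm_mult norm_triangle_ineq[THEN order_trans])
    then have "norm (gb q (Suc N) j) * pp r j
       \<le> (norm (gb q N i) + r ^ Suc i * norm (gb q N (Suc i))) * pp r j"
      using pp_nonneg[of r] r by (intro mult_right_mono) auto
    also have "\<dots> = (norm (gb q N i) * pp r i) * (1 - r ^ Suc i)
                     + r ^ Suc i * (norm (gb q N (Suc i)) * pp r (Suc i))"
      using Suc by (simp add: pp_Suc algebra_simps)
    also have "\<dots> \<le> 1 * (1 - r ^ Suc i) + r ^ Suc i * 1"
      using Suc.IH[of i] Suc.IH[of "Suc i"] r ri unfolding r_def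
      by (intro add_mono mult_right_mono mult_left_mono) auto
    finally show ?thesis by (simp add: r_def)
  qed
qed

lemma pp_lower:
  fixes r :: real assumes "0 \<le> r" "r < 1"
  shows "\<exists>L>0. \<forall>n. pp r n \<ge> L"
proof -
  define f where "f k = 1 - r * r ^ k" for k
  have conv: "convergent_prod f"
  proof (unfold f_def, rule abs_convergent_prod_imp_convergent_prod, rule summable_imp_abs_convergent_prod)
    have "summable (\<lambda>n. r * r ^ n)" using assms by (intro summable_mult summable_geometric) auto
    then show "summable (\<lambda>n. norm (1 - r * r ^ n - 1))" using assms by simp
  qed
  have f01: "0 \<le> f k" "f k \<le> 1" for k
    using assms by (auto simp: f_def rp_le)
  have fnz: "f k \<noteq> 0" for k
  proof -
    have "r * r ^ k < 1" using assms by (rule rp_less)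
    then show ?thesis by (simp add: f_def)
  qed
  have L0: "prodinf f \<noteq> 0" by (rule prodinf_nonzero[OF conv fnz])
  have "(\<lambda>n. \<Prod>i\<le>n. f i) \<longlonglongrightarrow> prodinf f" by (rule convergent_prod_LIMSEQ[OF conv])
  then have "prodinf f \<ge> 0"
    by (rule tendsto_lowerbound) (auto intro!: always_eventually prod_nonneg f01)
  with L0 have pos: "prodinf f > 0" by simp
  have "pp r n \<ge> prodinf f" for n
  proof -
    have "pp r n = prod f {..<n}" by (simp add: pp_def f_def)
    also have "\<dots> \<ge> prodinf f"
      by (rule prod_ge_prodinf) (use conv f01 in \<open>auto simp: convergent_prod_has_prod\<close>)
    finally show ?thesis .
  qed
  with pos show ?thesis by blast
qed

lemma gb_bound:
  fixes q :: complex assumes "norm q < 1"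
  shows "\<exists>K. \<forall>N j. norm (gb q N j) \<le> K"
proof -
  obtain L where L: "L > 0" "\<And>n. pp (norm q) n \<ge> L"
    using pp_lower[of "norm q"] assms by auto
  have "norm (gb q N j) \<le> 1 / L" for N j
  proof -
    have "norm (gb q N j) * L \<le> norm (gb q N j) * pp (norm q) j"
      using L by (intro mult_left_mono) auto
    also have "\<dots> \<le> 1" by (rule gb_bound_aux[OF assms])
    finally show ?thesis using L by (simp add: field_simps)
  qed
  then show ?thesis by blast
qed

lemma dsum_Suc: "2 * (\<Sum>m<n. Suc m) = n * Suc n"
  by (induction n) (simp_all add: algebra_simps)

lemma even_tri: "2 * ((x::int) * (x - 1) div 2) = x * (x - 1)"
proof -
  have "even (x * (x - 1))" by auto
  then show ?thesis by (rule dvd_mult_div_cancel)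
qed

lemma even_tri_nat: "2 * int ((j::nat) * (j - 1) div 2) = int j * (int j - 1)"
proof -
  have "even (j * (j - 1))" by auto
  then have "2 * (j * (j - 1) div 2) = j * (j - 1)" by (rule dvd_mult_div_cancel)
  then have "2 * int (j * (j - 1) div 2) = int (j * (j - 1))" by (metis of_nat_mult of_nat_numeral)
  moreover have "int (j * (j - 1)) = int j * (int j - 1)" by (cases j) (auto simp: algebra_simps)
  ultimately show ?thesis by simp
qed

lemma prod_split_half:
  fixes n :: nat shows "(\<Prod>k<2*n. f k) = (\<Prod>k<n. f k) * (\<Prod>k<n. f (k + n))"
proof -
  have "{..<2*n} = {..<n} \<union> {n..<n+n}" by auto
  then have "(\<Prod>k<2*n. f k) = prod f ({..<n} \<union> {n..<n+n})" by simp
  also have "\<dots> = (\<Prod>k<n. f k) * prod f {n..<n+n}"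
    by (rule prod.union_disjoint) auto
  also have "prod f {n..<n+n} = prod f {0+n..<n+n}" by simp
  also have "\<dots> = (\<Prod>k\<in>{0..<n}. f (k + n))" by (rule prod.shift_bounds_nat_ivl)
  finally show ?thesis by (simp add: atLeast0LessThan)
qed

lemma jtp_fin:
  fixes Q w :: complex
  assumes Q: "Q \<noteq> 0" and w: "w \<noteq> 0"
  shows "(\<Sum>i\<in>{-int n..int n}. gb Q (2*n) (nat (i + int n)) * Q powi (i*(i-1) div 2) * w powi i)
       = (\<Prod>m<n. (1 + Q^(Suc m)/w)) * (\<Prod>k<n. (1 + w*Q^k))"
proof -
  define E where "E = (\<Sum>m<n. Suc m)"
  have C: "(\<Prod>k<2*n. (1 + (w/Q^n) * Q^k)) = (\<Sum>j\<le>2*n. gb Q (2*n) j * Q ^ (j*(j-1) div 2) * (w/Q^n) ^ j)"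
    by (rule cauchy_fin)
  have P1: "(\<Prod>k<n. (1 + (w/Q^n) * Q^k)) = (w^n / Q^E) * (\<Prod>m<n. (1 + Q^(Suc m)/w))"
  proof -
    have "(\<Prod>k<n. (1 + (w/Q^n) * Q^k)) = (\<Prod>m<n. (1 + (w/Q^n) * Q^(n - Suc m)))"
      by (rule prod.nat_diff_reindex[symmetric])
    also have "\<dots> = (\<Prod>m<n. (w / Q^(Suc m)) * (1 + Q^(Suc m)/w))"
    proof (rule prod.cong[OF refl])
      fix m assume "m \<in> {..<n}"
      then have "Q^n = Q^(n - Suc m) * Q^(Suc m)" by (subst power_add[symmetric]) simp
      then show "1 + (w/Q^n) * Q^(n - Suc m) = (w / Q^(Suc m)) * (1 + Q^(Suc m)/w)"
        using Q w by (simp add: field_simps)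
    qed
    also have "\<dots> = (\<Prod>m<n. w / Q^(Suc m)) * (\<Prod>m<n. (1 + Q^(Suc m)/w))"
      by (rule prod.distrib)
    also have "(\<Prod>m<n. w / Q^(Suc m)) = w^n / Q^E"
      by (simp add: E_def prod_dividef power_sum)
    finally show ?thesis .
  qed
  have P2: "(\<Prod>k<n. (1 + (w/Q^n) * Q^(k+n))) = (\<Prod>k<n. (1 + w*Q^k))"
    using Q by (intro prod.cong refl) (simp add: power_add)
  have L: "(\<Prod>k<2*n. (1 + (w/Q^n) * Q^k)) = (w^n / Q^E) * ((\<Prod>m<n. (1 + Q^(Suc m)/w)) * (\<Prod>k<n. (1 + w*Q^k)))"
  proof -
    have "(\<Prod>k<2*n. (1 + (w/Q^n) * Q^k)) = (\<Prod>k<n. (1 + (w/Q^n) * Q^k)) * (\<Prod>k<n. (1 + (w/Q^n) * Q^(k+n)))"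
      by (rule prod_split_half)
    also have "\<dots> = (w^n / Q^E) * ((\<Prod>m<n. (1 + Q^(Suc m)/w)) * (\<Prod>k<n. (1 + w*Q^k)))"
      unfolding P1 P2 by (simp only: mult.assoc)
    finally show ?thesis .
  qed
  define F where "F i = gb Q (2*n) (nat (i + int n)) * Q powi (i*(i-1) div 2) * w powi i" for i
  have tm: "gb Q (2*n) j * Q ^ (j*(j-1) div 2) * (w/Q^n) ^ j = (w^n / Q^E) * F (int j - int n)" for j
  proof -
    have ex: "int (j*(j-1) div 2) = (int j - int n) * (int j - int n - 1) div 2 + int (n * j) - int E"
    proof -
      have a: "2 * int (j*(j-1) div 2) = int j * (int j - 1)" by (rule even_tri_nat)
      have b: "2 * int E = int n * (int n + 1)" using dsum_Suc[of n] unfolding E_def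
        by (metis of_nat_Suc of_nat_add of_nat_mult of_nat_numeral add.commute) 
      define X where "X = (int j - int n) * (int j - int n - 1) div 2"
      have c: "2 * X = (int j - int n) * (int j - int n - 1)"
        unfolding X_def by (rule even_tri)
      have d: "(int j - int n) * (int j - int n - 1) + 2 * (int n * int j) - int n * (int n + 1) = int j * (int j - 1)"
        by (simp add: algebra_simps)
      have "2 * int (j*(j-1) div 2) = 2 * (X + int (n * j) - int E)"
        using a b c d by (simp add: algebra_simps)
      then show ?thesis by (simp add: X_def)
    qed
    define P where "P = Q powi ((int j - int n) * (int j - int n - 1) div 2)"
    have f1: "Q ^ (j*(j-1) div 2) = P * Q ^ (n*j) / Q ^ E"
    proof -
      have "Q ^ (j*(j-1) div 2) = Q powi (int (j*(j-1) div 2))" by (simp only: power_int_of_nat)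
      also have "\<dots> = Q powi ((int j - int n) * (int j - int n - 1) div 2 + int (n * j) - int E)"
        by (simp only: ex)
      also have "\<dots> = Q powi ((int j - int n) * (int j - int n - 1) div 2) * Q powi (int (n * j)) / Q powi (int E)"
        by (simp only: power_int_diff[OF disjI1[OF Q]] power_int_add[OF disjI1[OF Q]])
      finally show ?thesis by (simp only: power_int_of_nat P_def)
    qed
    have f2: "w powi (int j - int n) = w^j / w^n" using w by (simp add: power_int_diff)
    have f3: "(w/Q^n)^j = w^j / Q^(n*j)" by (simp add: power_divide power_mult)
    have f4: "F (int j - int n) = gb Q (2*n) j * P * (w^j / w^n)"
      unfolding F_def P_def[symmetric] f2 by simp
    show ?thesis unfolding f1 f3 f4 using Q w by (simp add: field_simps)
  qed
  have S: "(\<Sum>j\<le>2*n. gb Q (2*n) j * Q ^ (j*(j-1) div 2) * (w/Q^n) ^ j)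
        = (w^n / Q^E) * (\<Sum>i\<in>{-int n..int n}. F i)"
  proof -
    have "(\<Sum>j\<le>2*n. gb Q (2*n) j * Q ^ (j*(j-1) div 2) * (w/Q^n) ^ j)
        = (w^n / Q^E) * (\<Sum>j\<le>2*n. F (int j - int n))"
      by (simp only: tm sum_distrib_left)
    also have "(\<Sum>j\<le>2*n. F (int j - int n)) = (\<Sum>i\<in>{-int n..int n}. F i)"
      by (rule sum.reindex_bij_witness[where i="\<lambda>i. nat (i + int n)" and j="\<lambda>j. int j - int n"]) auto
    finally show ?thesis .
  qed
  have nz: "w^n / Q^E \<noteq> 0" using Q w by simp
  from C L S have "(w^n / Q^E) * ((\<Prod>m<n. (1 + Q^(Suc m)/w)) * (\<Prod>k<n. (1 + w*Q^k)))
     = (w^n / Q^E) * (\<Sum>i\<in>{-int n..int n}. F i)" by simp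
  then have "(\<Sum>i\<in>{-int n..int n}. F i) = (\<Prod>m<n. (1 + Q^(Suc m)/w)) * (\<Prod>k<n. (1 + w*Q^k))"
    using nz by (metis mult_left_cancel)
  then show ?thesis unfolding F_def .
qed

lemma infsum_int_as_suminf:
  fixes f :: "int \<Rightarrow> complex"
  assumes "(\<lambda>i. norm (f i)) summable_on UNIV"
  shows "summable (\<lambda>k. norm (f (int_decode k)))" "infsum f UNIV = (\<Sum>k. f (int_decode k))"
proof -
  have "(\<lambda>i. norm (f i)) summable_on range int_decode" using assms by (simp add: surj_int_decode)
  then have "(\<lambda>k. norm (f (int_decode k))) summable_on UNIV"
    by (subst (asm) summable_on_reindex) (auto simp: inj_int_decode o_def)
  then show s: "summable (\<lambda>k. norm (f (int_decode k)))" by (rule summable_on_imp_summable)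
  have "infsum f UNIV = infsum f (range int_decode)" by (simp add: surj_int_decode)
  also have "\<dots> = infsum (\<lambda>k. f (int_decode k)) UNIV"
    by (subst infsum_reindex) (auto simp: inj_int_decode o_def)
  also have "\<dots> = (\<Sum>k. f (int_decode k))"
    by (rule infsumI, rule norm_summable_imp_has_sum[OF s]) (rule summable_sums[OF summable_norm_cancel[OF s]])
  finally show "infsum f UNIV = (\<Sum>k. f (int_decode k))" .
qed

lemma dc_int:
  fixes f :: "nat \<Rightarrow> int \<Rightarrow> complex"
  assumes lim: "\<And>i. (\<lambda>n. f n i) \<longlonglongrightarrow> g i"
    and bd: "\<And>n i. norm (f n i) \<le> M i" and M: "M summable_on UNIV"
  shows "(\<lambda>n. infsum (f n) UNIV) \<longlonglongrightarrow> infsum g UNIV"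
proof -
  have Mn: "M i \<ge> 0" for i using bd[of 0 i] norm_ge_zero order_trans by blast
  have bdg: "norm (g i) \<le> M i" for i
    by (rule tendsto_upperbound[OF tendsto_norm[OF lim[of i]]]) (auto intro: always_eventually bd)
  have sf: "(\<lambda>i. norm (f n i)) summable_on UNIV" for n
    by (rule summable_on_comparison_test[OF M]) (auto intro: bd)
  have sg: "(\<lambda>i. norm (g i)) summable_on UNIV"
    by (rule summable_on_comparison_test[OF M]) (auto intro: bdg)
  have sM: "summable (\<lambda>k. M (int_decode k))"
  proof -
    have "M summable_on range int_decode" using M by (simp add: surj_int_decode)
    then have "(\<lambda>k. M (int_decode k)) summable_on UNIV"
      by (subst (asm) summable_on_reindex) (auto simp: inj_int_decode o_def)
    then show ?thesis by (rule summable_on_imp_summable)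
  qed
  have "(\<lambda>n. \<Sum>k. f n (int_decode k)) \<longlonglongrightarrow> (\<Sum>k. g (int_decode k))"
    by (rule tannerys_theorem[where M="\<lambda>k. M (int_decode k)", THEN conjunct2, THEN conjunct2])
       (auto intro: lim bd sM always_eventually)
  then show ?thesis
    using infsum_int_as_suminf(2)[OF sf] infsum_int_as_suminf(2)[OF sg] by simp
qed

lemma quad_bound_aux:
  fixes i :: int and m :: nat
  shows "i * (i - 1) div 2 - int m * \<bar>i\<bar> \<ge> \<bar>i\<bar> - (2 * int m + 3)^2"
proof -
  have e: "2 * (i * (i - 1) div 2) = i * (i - 1)" by (rule even_tri)
  define a where "a = \<bar>i\<bar>"
  have a0: "a \<ge> 0" by (simp add: a_def)
  have sq: "i * i = a * a" by (simp add: a_def abs_mult_self_eq)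
  have "i * (i - 1) \<ge> a * a - a" using sq by (simp add: a_def algebra_simps)
  moreover have "a * a - a - 2 * int m * a \<ge> 2 * a - 2 * (2 * int m + 3)^2"
  proof (cases "a \<ge> 2 * int m + 3")
    case True
    then have "a * a \<ge> (2 * int m + 3) * a" using a0 by (intro mult_right_mono) auto
    moreover have "(2 * int m + 3) * a = 2 * int m * a + 3 * a" by (simp add: algebra_simps)
    moreover have "0 \<le> (2 * int m + 3)^2" by simp
    ultimately show ?thesis by linarith
  next
    case False
    then have "(2 * int m + 3) * a \<le> (2 * int m + 3) * (2 * int m + 3)" using a0
      by (intro mult_left_mono) auto
    moreover have "a * a \<ge> 0" using a0 by simp
    moreover have "(2 * int m + 3) * a = 2 * int m * a + 3 * a" by (simp add: algebra_simps)
    moreover have "(2 * int m + 3) * (2 * int m + 3) = (2 * int m + 3)^2" by (simp add: power2_eq_square)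
    moreover have "0 \<le> (2 * int m + 3)^2" by simp
    ultimately show ?thesis by linarith
  qed
  ultimately show ?thesis using e by (simp add: a_def algebra_simps)
qed

lemma summ_jt:
  fixes r x :: real assumes r: "0 < r" "r < 1" and x: "0 < x"
  shows "(\<lambda>i::int. r powi (i * (i - 1) div 2) * x powi i) summable_on UNIV"
proof -
  have "1 < 1 / r" using r by simp
  obtain m1 where m1: "x < (1 / r) ^ m1" using real_arch_pow[OF \<open>1 < 1 / r\<close>] by blast
  obtain m2 where m2: "1 / x < (1 / r) ^ m2" using real_arch_pow[OF \<open>1 < 1 / r\<close>] by blast
  define m where "m = max m1 m2"
  have r1: "1 \<le> 1 / r" using r by simp
  have X1: "x \<le> (1 / r) ^ m" using m1 power_increasing[OF _ r1, of m1 m] by (simp add: m_def)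
  have X2: "1 / x \<le> (1 / r) ^ m" using m2 power_increasing[OF _ r1, of m2 m] by (simp add: m_def)
  have rr: "((1 / r) ^ m) ^ nat \<bar>i\<bar> = r powi (- (int m * \<bar>i\<bar>))" for i :: int
  proof -
    have k: "int m * \<bar>i\<bar> = int (m * nat \<bar>i\<bar>)" by simp
    have "r powi (- (int m * \<bar>i\<bar>)) = inverse (r ^ (m * nat \<bar>i\<bar>))"
      by (simp only: k power_int_minus power_int_of_nat)
    moreover have "((1 / r) ^ m) ^ nat \<bar>i\<bar> = inverse (r ^ (m * nat \<bar>i\<bar>))"
      by (simp only: power_mult[symmetric] power_one_over inverse_eq_divide)
    ultimately show ?thesis by simp
  qed
  have xb: "x powi i \<le> r powi (- (int m * \<bar>i\<bar>))" for i :: int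
  proof (cases "i \<ge> 0")
    case True
    have "x powi i = x ^ nat i" using True by (simp add: power_int_nonneg_exp)
    also have "\<dots> \<le> ((1 / r) ^ m) ^ nat i" using X1 x by (intro power_mono) auto
    also have "\<dots> = r powi (- (int m * \<bar>i\<bar>))" using True rr[of i] by simp
    finally show ?thesis .
  next
    case False
    have "x powi i = inverse (x powi (-i))" using power_int_minus[of x "-i"] by (simp only: minus_minus)
    also have "\<dots> = inverse (x ^ nat (-i))" using False by (simp add: power_int_nonneg_exp)
    also have "\<dots> = (1 / x) ^ nat (-i)" by (simp only: power_one_over inverse_eq_divide)
    finally have "x powi i = (1 / x) ^ nat (-i)" .
    also have "\<dots> \<le> ((1 / r) ^ m) ^ nat (-i)" using X2 x by (intro power_mono) auto
    also have "\<dots> = r powi (- (int m * \<bar>i\<bar>))" using False rr[of i] by simp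
    finally show ?thesis .
  qed
  show ?thesis
  proof (rule summable_on_comparison_test)
    show "(\<lambda>i::int. r powi (i * (i - 1) div 2 - int m * \<bar>i\<bar>)) summable_on UNIV"
      by (rule summ_int_quad[OF r quad_bound_aux])
    fix i :: int
    have "r powi (i * (i - 1) div 2) * x powi i \<le> r powi (i * (i - 1) div 2) * r powi (- (int m * \<bar>i\<bar>))"
      using xb r by (intro mult_left_mono) auto
    also have "\<dots> = r powi (i * (i - 1) div 2 + (- (int m * \<bar>i\<bar>)))"
      by (rule power_int_add[symmetric]) (use r in auto)
    also have "\<dots> = r powi (i * (i - 1) div 2 - int m * \<bar>i\<bar>)" by (simp only: diff_conv_add_uminus)
    finally show "r powi (i * (i - 1) div 2) * x powi i \<le> r powi (i * (i - 1) div 2 - int m * \<bar>i\<bar>)" .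
    show "0 \<le> r powi (i * (i - 1) div 2) * x powi i" using r x by simp
  qed
qed

lemma pp_lim:
  fixes Q :: complex assumes "norm Q < 1"
  shows "(\<lambda>k. pp Q k) \<longlonglongrightarrow> qpoch Q Q"
proof -
  have "pp Q k = (\<Prod>j<k. (1 - Q * Q ^ j))" for k by (simp add: pp_def)
  then show ?thesis using qpoch_lim[OF assms, of Q] by simp
qed

lemma pp_nz:
  fixes Q :: complex assumes "norm Q < 1"
  shows "pp Q k \<noteq> 0"
proof -
  have "Q ^ Suc j \<noteq> 1" for j
  proof -
    have "norm (Q ^ Suc j) < 1" using rp_less[of "norm Q" j] assms by (simp add: norm_mult norm_power)
    then show ?thesis by auto
  qed
  then show ?thesis by (simp add: pp_def)
qed

lemma qpochQQ_nz:
  fixes Q :: complex assumes "norm Q < 1"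
  shows "qpoch Q Q \<noteq> 0"
proof (rule qpoch_nz[OF assms])
  fix n
  have "norm (Q * Q ^ n) < 1" using rp_less[of "norm Q" n] assms by (simp add: norm_mult norm_power)
  then show "Q * Q ^ n \<noteq> 1" by auto
qed

lemma nat_shift_at_top: "filterlim (\<lambda>n::nat. nat (int n + c)) at_top at_top"
  unfolding filterlim_at_top
proof
  fix Z :: nat
  show "eventually (\<lambda>n. Z \<le> nat (int n + c)) at_top"
    unfolding eventually_at_top_linorder by (rule exI[where x="nat (int Z - c)"]) auto
qed

theorem jtp:
  fixes Q w :: complex
  assumes Q1: "norm Q < 1" and Q0: "Q \<noteq> 0" and w0: "w \<noteq> 0"
  shows "(\<lambda>i. norm (Q powi (i*(i-1) div 2) * w powi i)) summable_on UNIV"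
    and "infsum (\<lambda>i. Q powi (i*(i-1) div 2) * w powi i) UNIV
         = qpoch (-w) Q * qpoch (-(Q/w)) Q * qpoch Q Q"
proof -
  define t where "t i = Q powi (i*(i-1) div 2) * w powi i" for i :: int
  have nt: "norm (t i) = norm Q powi (i*(i-1) div 2) * norm w powi i" for i
    by (simp add: t_def norm_mult norm_power_int)
  show ns: "(\<lambda>i. norm (Q powi (i*(i-1) div 2) * w powi i)) summable_on UNIV"
    using summ_jt[of "norm Q" "norm w"] Q1 Q0 w0 nt unfolding t_def by simp
  then have ns': "(\<lambda>i. norm (t i)) summable_on UNIV" by (simp add: t_def)
  obtain K where K: "\<And>N j. norm (gb Q N j) \<le> K" using gb_bound[OF Q1] by blast
  define P where "P = qpoch Q Q"
  have P0: "P \<noteq> 0" unfolding P_def by (rule qpochQQ_nz[OF Q1])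
  define F where "F n i = (if \<bar>i\<bar> \<le> int n then gb Q (2*n) (nat (i + int n)) else 0) * t i" for n :: nat and i :: int
  have bd: "norm (F n i) \<le> K * norm (t i)" for n i
  proof -
    have "norm (if \<bar>i\<bar> \<le> int n then gb Q (2*n) (nat (i + int n)) else 0) \<le> K"
      using K[of 0 1] K by auto
    then show ?thesis unfolding F_def norm_mult by (intro mult_right_mono) auto
  qed
  have Msum: "(\<lambda>i. K * norm (t i)) summable_on UNIV"
    by (intro summable_on_cmult_right ns')
  have lim: "(\<lambda>n. F n i) \<longlonglongrightarrow> t i / P" for i
  proof -
    have ev: "eventually (\<lambda>n. F n i = pp Q (2*n) / (pp Q (nat (int n + i)) * pp Q (nat (int n + (-i)))) * t i) at_top"
      unfolding eventually_at_top_linorder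
    proof (rule exI[where x="nat \<bar>i\<bar>"], intro allI impI)
      fix n assume n: "nat \<bar>i\<bar> \<le> n"
      then have ii: "\<bar>i\<bar> \<le> int n" by simp
      have j: "nat (i + int n) \<le> 2 * n" using ii by simp
      have d: "2 * n - nat (i + int n) = nat (int n + (-i))" using ii by simp
      have "gb Q (2*n) (nat (i + int n)) * pp Q (nat (i + int n)) * pp Q (2 * n - nat (i + int n)) = pp Q (2*n)"
        by (rule gb_pp[OF j])
      then have "gb Q (2*n) (nat (i + int n)) = pp Q (2*n) / (pp Q (nat (int n + i)) * pp Q (nat (int n + (-i))))"
        using pp_nz[OF Q1] unfolding d by (simp add: field_simps add.commute)
      then show "F n i = pp Q (2*n) / (pp Q (nat (int n + i)) * pp Q (nat (int n + (-i)))) * t i"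
        using ii by (simp add: F_def)
    qed
    have l1: "(\<lambda>n. pp Q (2*n)) \<longlonglongrightarrow> P"
    proof -
      have "strict_mono (\<lambda>n::nat. 2*n)" by (auto simp: strict_mono_def)
      from LIMSEQ_subseq_LIMSEQ[OF pp_lim[OF Q1] this] show ?thesis by (simp add: o_def P_def)
    qed
    have l2: "(\<lambda>n. pp Q (nat (int n + c))) \<longlonglongrightarrow> P" for c
      using filterlim_compose[OF pp_lim[OF Q1] nat_shift_at_top[of c]] by (simp add: P_def)
    have "(\<lambda>n. pp Q (2*n) / (pp Q (nat (int n + i)) * pp Q (nat (int n + (-i)))) * t i) \<longlonglongrightarrow> P / (P * P) * t i"
      by (intro tendsto_intros l1 l2) (use P0 in simp)
    moreover have "P / (P * P) * t i = t i / P" using P0 by (simp add: field_simps)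
    ultimately have LL: "(\<lambda>n. pp Q (2*n) / (pp Q (nat (int n + i)) * pp Q (nat (int n + (-i)))) * t i) \<longlonglongrightarrow> t i / P"
      by simp
    show ?thesis by (subst tendsto_cong[OF ev]) (rule LL)
  qed
  have L1: "(\<lambda>n. infsum (F n) UNIV) \<longlonglongrightarrow> infsum (\<lambda>i. t i / P) UNIV"
    by (rule dc_int[OF lim bd Msum])
  have sumF: "infsum (F n) UNIV = (\<Prod>m<n. (1 + Q^(Suc m)/w)) * (\<Prod>k<n. (1 + w*Q^k))" for n
  proof -
    have "infsum (F n) UNIV = infsum (F n) {-int n..int n}"
      by (rule infsum_cong_neutral) (auto simp: F_def)
    also have "\<dots> = (\<Sum>i\<in>{-int n..int n}. F n i)" by simp
    also have "\<dots> = (\<Sum>i\<in>{-int n..int n}. gb Q (2*n) (nat (i + int n)) * Q powi (i*(i-1) div 2) * w powi i)"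
      by (intro sum.cong refl) (auto simp: F_def t_def)
    also have "\<dots> = (\<Prod>m<n. (1 + Q^(Suc m)/w)) * (\<Prod>k<n. (1 + w*Q^k))"
      by (rule jtp_fin[OF Q0 w0])
    finally show ?thesis .
  qed
  have L2: "(\<lambda>n. infsum (F n) UNIV) \<longlonglongrightarrow> qpoch (-(Q/w)) Q * qpoch (-w) Q"
  proof -
    have a: "(\<Prod>m<n. (1 + Q^(Suc m)/w)) = (\<Prod>m<n. (1 - (-(Q/w)) * Q^m))" for n
      by (intro prod.cong refl) (simp add: field_simps)
    have b: "(\<Prod>k<n. (1 + w*Q^k)) = (\<Prod>k<n. (1 - (-w) * Q^k))" for n
      by simp
    show ?thesis unfolding sumF a b by (intro tendsto_mult qpoch_lim Q1)
  qed
  have "infsum (\<lambda>i. t i / P) UNIV = qpoch (-(Q/w)) Q * qpoch (-w) Q"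
    using LIMSEQ_unique[OF L1 L2] .
  moreover have "infsum (\<lambda>i. t i / P) UNIV = infsum t UNIV / P"
    using infsum_cmult_left'[of t "inverse P" UNIV] by (simp add: divide_inverse)
  ultimately have "infsum t UNIV = qpoch (-(Q/w)) Q * qpoch (-w) Q * P"
    using P0 by (simp add: field_simps)
  then have "infsum t UNIV = qpoch (-w) Q * qpoch (-(Q/w)) Q * qpoch Q Q"
    by (simp add: P_def mult_ac)
  then show "infsum (\<lambda>i. Q powi (i*(i-1) div 2) * w powi i) UNIV
         = qpoch (-w) Q * qpoch (-(Q/w)) Q * qpoch Q Q"
    by (simp only: t_def[abs_def])
qed

definition th :: "complex \<Rightarrow> int \<Rightarrow> int \<Rightarrow> complex" where
  "th q k s = infsum (\<lambda>n::int. q powi (k * n^2 + s * n)) UNIV"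

lemma quad_bound2:
  fixes n s :: int assumes "k \<ge> 1"
  shows "k * n^2 + s * n \<ge> \<bar>n\<bar> - (\<bar>s\<bar> + 1)^2"
proof -
  define a where "a = \<bar>n\<bar>"
  define c where "c = \<bar>s\<bar> + 1"
  have a0: "a \<ge> 0" and c0: "c \<ge> 1" by (auto simp: a_def c_def)
  have sq: "n^2 = a * a" by (simp add: a_def power2_eq_square abs_mult_self_eq)
  have "k * n^2 \<ge> n^2" using mult_right_mono[OF assms, of "n^2"] by simp
  moreover have "s * n \<ge> - (\<bar>s\<bar> * a)"
    by (simp add: a_def) (metis abs_mult abs_ge_minus_self minus_le_iff)
  moreover have "a * a - \<bar>s\<bar> * a \<ge> a - c^2"
  proof (cases "a \<ge> c")
    case True
    then have "a * a \<ge> c * a" using a0 by (intro mult_right_mono) auto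
    moreover have "c * a = \<bar>s\<bar> * a + a" by (simp add: c_def algebra_simps)
    moreover have "0 \<le> c^2" by simp
    ultimately show ?thesis by linarith
  next
    case False
    then have "c * a \<le> c * c" using a0 c0 by (intro mult_left_mono) auto
    moreover have "c * a = \<bar>s\<bar> * a + a" by (simp add: c_def algebra_simps)
    moreover have "c * c = c^2" by (simp add: power2_eq_square)
    moreover have "a * a \<ge> 0" using a0 by simp
    ultimately show ?thesis by linarith
  qed
  ultimately show ?thesis unfolding sq c_def using a_def by linarith
qed

lemma th_summ:
  fixes q :: complex assumes q1: "norm q < 1" and q0: "q \<noteq> 0" and k: "k \<ge> 1"
  shows "(\<lambda>n::int. norm (q powi (k * n^2 + s * n))) summable_on UNIV"
    and "(\<lambda>n::int. q powi (k * n^2 + s * n)) summable_on UNIV"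
proof -
  show *: "(\<lambda>n::int. norm (q powi (k * n^2 + s * n))) summable_on UNIV"
    unfolding norm_power_int
    by (rule summ_int_quad[OF _ q1 quad_bound2[OF k]]) (use q0 in simp)
  then show "(\<lambda>n::int. q powi (k * n^2 + s * n)) summable_on UNIV"
    by (rule abs_summable_summable)
qed

lemma th_neg:
  fixes q :: complex
  shows "th q k (-s) = th q k s"
proof -
  have "th q k s = infsum (\<lambda>n::int. q powi (k * n^2 + s * n)) (range uminus)"
    by (simp add: th_def surj_def)
  also have "\<dots> = infsum ((\<lambda>n::int. q powi (k * n^2 + s * n)) \<circ> uminus) UNIV"
    by (rule infsum_reindex) auto
  also have "\<dots> = th q k (-s)" by (simp add: th_def o_def)
  finally show ?thesis by simp
qed

lemma infsum_parity:
  fixes f :: "int \<Rightarrow> complex"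
  assumes "f summable_on UNIV"
  shows "infsum f UNIV = infsum (\<lambda>m. f (2*m)) UNIV + infsum (\<lambda>m. f (2*m+1)) UNIV"
proof -
  have U: "(UNIV::int set) = range (\<lambda>m. 2*m) \<union> range (\<lambda>m. 2*m+1)"
  proof -
    have "n \<in> range (\<lambda>m. 2*m) \<union> range (\<lambda>m. 2*m+1)" for n :: int
    proof (cases "even n")
      case True then obtain m where "n = 2*m" by blast
      then show ?thesis by blast
    next
      case False then obtain m where "n = 2*m+1" using oddE by blast
      then show ?thesis by blast
    qed
    then show ?thesis by blast
  qed
  have D: "range (\<lambda>m::int. 2*m) \<inter> range (\<lambda>m. 2*m+1) = {}" by auto presburger
  have s1: "f summable_on range (\<lambda>m::int. 2*m)" by (rule summable_on_subset_banach[OF assms]) simp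
  have s2: "f summable_on range (\<lambda>m::int. 2*m+1)" by (rule summable_on_subset_banach[OF assms]) simp
  have "infsum f (range (\<lambda>m::int. 2*m) \<union> range (\<lambda>m. 2*m+1)) = infsum f (range (\<lambda>m::int. 2*m)) + infsum f (range (\<lambda>m. 2*m+1))"
    by (rule infsum_Un_disjoint[OF s1 s2 D])
  then have "infsum f UNIV = infsum f (range (\<lambda>m::int. 2*m)) + infsum f (range (\<lambda>m. 2*m+1))"
    by (simp only: U[symmetric])
  also have "infsum f (range (\<lambda>m::int. 2*m)) = infsum (\<lambda>m. f (2*m)) UNIV"
    by (subst infsum_reindex) (auto simp: inj_on_def o_def)
  also have "infsum f (range (\<lambda>m::int. 2*m+1)) = infsum (\<lambda>m. f (2*m+1)) UNIV"
    by (subst infsum_reindex) (auto simp: inj_on_def o_def)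
  finally show ?thesis .
qed

lemma infsum_prod_int:
  fixes g h :: "int \<Rightarrow> complex"
  assumes g: "(\<lambda>m. norm (g m)) summable_on UNIV" and h: "(\<lambda>n. norm (h n)) summable_on UNIV"
  shows "(\<lambda>(m,n). g m * h n) summable_on UNIV"
    and "infsum (\<lambda>(m,n). g m * h n) UNIV = infsum g UNIV * infsum h UNIV"
proof -
  define H where "H = infsum (\<lambda>n. norm (h n)) UNIV"
  have abs0: "(\<lambda>(m,n). norm (g m) * norm (h n)) summable_on (UNIV \<times> UNIV)"
  proof (rule summable_on_SigmaI[where g="\<lambda>m. norm (g m) * H"])
    fix m :: int
    show "((\<lambda>n. case (m, n) of (m, n) \<Rightarrow> norm (g m) * norm (h n)) has_sum norm (g m) * H) UNIV"
      unfolding H_def by (simp add: has_sum_cmult_right h)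
  next
    show "(\<lambda>m. norm (g m) * H) summable_on UNIV" by (intro summable_on_cmult_left g)
  qed auto
  have abs: "(\<lambda>x. norm ((\<lambda>(m,n). g m * h n) x)) summable_on (UNIV \<times> UNIV)"
    using abs0 by (simp add: case_prod_unfold norm_mult)
  then have s: "(\<lambda>(m,n). g m * h n) summable_on (UNIV \<times> UNIV)" by (rule abs_summable_summable)
  then show "(\<lambda>(m,n). g m * h n) summable_on UNIV" by simp
  have "infsum (\<lambda>(m,n). g m * h n) (UNIV \<times> UNIV) = infsum (\<lambda>m. infsum (\<lambda>n. g m * h n) UNIV) UNIV"
    using infsum_Sigma_banach[OF s] by simp
  also have "\<dots> = infsum (\<lambda>m. g m * infsum h UNIV) UNIV"
    by (simp add: infsum_cmult_right')
  also have "\<dots> = infsum g UNIV * infsum h UNIV"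
    by (simp add: infsum_cmult_left')
  finally show "infsum (\<lambda>(m,n). g m * h n) UNIV = infsum g UNIV * infsum h UNIV" by simp
qed

lemma pmul: "(q::complex) \<noteq> 0 \<Longrightarrow> q powi A * q powi B = q powi (A + B)"
  by (simp add: power_int_add)

lemma th_prod:
  fixes q :: complex assumes q1: "norm q < 1" and q0: "q \<noteq> 0" and k: "k \<ge> 1" "l \<ge> 1"
  shows "(\<lambda>(m,n). q powi (k * m^2 + a * m) * q powi (l * n^2 + b * n)) summable_on UNIV"
    and "infsum (\<lambda>(m,n). q powi (k * m^2 + a * m) * q powi (l * n^2 + b * n)) UNIV = th q k a * th q l b"
  using infsum_prod_int[OF th_summ(1)[OF q1 q0 k(1)] th_summ(1)[OF q1 q0 k(2)]]
  by (simp_all add: th_def)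

lemma lemS:
  fixes q :: complex and x y :: int
  assumes q1: "norm q < 1" and q0: "q \<noteq> 0"
  shows "th q 5 x * th q 5 y = th q 10 (x+y) * th q 10 (x-y)
           + q powi (5+x) * (th q 10 (x+y+10) * th q 10 (x-y+10))"
proof -
  define f where "f = (\<lambda>(a,b). q powi (5*a^2 + x*a) * q powi (5*b^2 + y*b))"
  define p0 :: "int \<times> int \<Rightarrow> int \<times> int" where "p0 = (\<lambda>(m,n). (m+n, m-n))"
  define p1 :: "int \<times> int \<Rightarrow> int \<times> int" where "p1 = (\<lambda>(m,n). (m+n+1, m-n))"
  have fs: "f summable_on UNIV" and fi: "infsum f UNIV = th q 5 x * th q 5 y"
    using th_prod[OF q1 q0, of 5 5 x y] unfolding f_def by auto
  have U: "range p0 \<union> range p1 = UNIV"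
  proof -
    have "z \<in> range p0 \<union> range p1" for z
    proof (cases z)
      case (Pair s t)
      show ?thesis
      proof (cases "even (s + t)")
        case True
        then obtain u where u: "s + t = 2 * u" by blast
        have "p0 (u, s - u) = (s, t)" using u by (simp add: p0_def)
        then show ?thesis using Pair by (metis UnI1 rangeI)
      next
        case False
        then obtain u where u: "s + t = 2 * u + 1" using oddE by blast
        have "p1 (u, s - 1 - u) = (s, t)" using u by (simp add: p1_def)
        then show ?thesis using Pair by (metis UnI2 rangeI)
      qed
    qed
    then show ?thesis by blast
  qed
  have D: "range p0 \<inter> range p1 = {}"
  proof -
    have "p0 a \<noteq> p1 b" for a b
    proof -
      obtain m n where a: "a = (m, n)" by fastforce
      obtain m' n' where b: "b = (m', n')" by fastforce
      show ?thesis
      proof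
        assume "p0 a = p1 b"
        then have "m + n = m' + n' + 1" "m - n = m' - n'" by (simp_all add: a b p0_def p1_def)
        then have "2 * m = 2 * m' + 1" by linarith
        then show False by presburger
      qed
    qed
    then show ?thesis by blast
  qed
  have inj0: "inj p0" by (auto simp: inj_on_def p0_def)
  have inj1: "inj p1" by (auto simp: inj_on_def p1_def)
  have s0: "f summable_on range p0" by (rule summable_on_subset_banach[OF fs]) simp
  have s1: "f summable_on range p1" by (rule summable_on_subset_banach[OF fs]) simp
  have "infsum f (range p0 \<union> range p1) = infsum f (range p0) + infsum f (range p1)"
    by (rule infsum_Un_disjoint[OF s0 s1 D])
  then have split: "infsum f UNIV = infsum (f \<circ> p0) UNIV + infsum (f \<circ> p1) UNIV"
    by (simp only: U infsum_reindex[OF inj0] infsum_reindex[OF inj1])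
  have e0: "(f \<circ> p0) = (\<lambda>(m,n). q powi (10 * m^2 + (x+y) * m) * q powi (10 * n^2 + (x-y) * n))"
  proof (rule ext, clarify)
    fix m n :: int
    have "5*(m+n)^2 + x*(m+n) + (5*(m-n)^2 + y*(m-n)) = 10 * m^2 + (x+y) * m + (10 * n^2 + (x-y) * n)"
      by (simp add: power2_eq_square algebra_simps)
    then show "(f \<circ> p0) (m, n) = q powi (10 * m^2 + (x+y) * m) * q powi (10 * n^2 + (x-y) * n)"
      by (simp add: f_def p0_def pmul[OF q0])
  qed
  have e1: "(f \<circ> p1) = (\<lambda>z. q powi (5+x) * (case z of (m,n) \<Rightarrow> q powi (10 * m^2 + (x+y+10) * m) * q powi (10 * n^2 + (x-y+10) * n)))"
  proof (rule ext, clarify)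
    fix m n :: int
    have "5*(m+n+1)^2 + x*(m+n+1) + (5*(m-n)^2 + y*(m-n)) = (5 + x) + ((10 * m^2 + (x+y+10) * m) + (10 * n^2 + (x-y+10) * n))"
      by (simp add: power2_eq_square algebra_simps)
    then show "(f \<circ> p1) (m, n) = q powi (5+x) * (q powi (10 * m^2 + (x+y+10) * m) * q powi (10 * n^2 + (x-y+10) * n))"
      by (simp add: f_def p1_def pmul[OF q0])
  qed
  have i0: "infsum (f \<circ> p0) UNIV = th q 10 (x+y) * th q 10 (x-y)"
    unfolding e0 by (rule th_prod(2)[OF q1 q0]) auto
  have i1: "infsum (f \<circ> p1) UNIV = q powi (5+x) * (th q 10 (x+y+10) * th q 10 (x-y+10))"
    unfolding e1 infsum_cmult_right' by (subst th_prod(2)[OF q1 q0]) auto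
  show ?thesis using fi split i0 i1 by simp
qed

lemma norm_pow_less1: "norm (q::complex) < 1 \<Longrightarrow> k \<ge> 1 \<Longrightarrow> norm (q ^ k) < 1"
  by (simp add: norm_power power_less_one_iff)

lemma th_jtp:
  fixes q :: complex and k s :: nat
  assumes q1: "norm q < 1" and q0: "q \<noteq> 0" and k: "k \<ge> 1" and sk: "s \<le> k"
  shows "th q (int k) (int s) = qpoch (-(q^(k+s))) (q^(2*k)) * qpoch (-(q^(k-s))) (q^(2*k)) * qpoch (q^(2*k)) (q^(2*k))"
proof -
  have Q1: "norm (q^(2*k)) < 1" using norm_pow_less1[OF q1, of "2*k"] k by simp
  have Q0: "q^(2*k) \<noteq> 0" and w0: "q^(k+s) \<noteq> 0" using q0 by auto
  have J: "infsum (\<lambda>i. (q^(2*k)) powi (i*(i-1) div 2) * (q^(k+s)) powi i) UNIV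
         = qpoch (-(q^(k+s))) (q^(2*k)) * qpoch (-((q^(2*k))/(q^(k+s)))) (q^(2*k)) * qpoch (q^(2*k)) (q^(2*k))"
    by (rule jtp(2)[OF Q1 Q0 w0])
  have dv: "(q^(2*k))/(q^(k+s)) = q^(k-s)"
  proof -
    have "q^(2*k) = q^(k-s) * q^(k+s)" using sk by (simp add: power_add[symmetric] mult_2)
    then show ?thesis using q0 by simp
  qed
  have tm: "(q^(2*k)) powi (i*(i-1) div 2) * (q^(k+s)) powi i = q powi (int k * i^2 + int s * i)" for i :: int
  proof -
    have "(q^(2*k)) powi (i*(i-1) div 2) * (q^(k+s)) powi i
        = q powi (int (2*k) * (i*(i-1) div 2)) * q powi (int (k+s) * i)"
      by (simp only: power_int_power)
    also have "\<dots> = q powi (int (2*k) * (i*(i-1) div 2) + int (k+s) * i)" by (rule pmul[OF q0])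
    also have "int (2*k) * (i*(i-1) div 2) + int (k+s) * i = int k * i^2 + int s * i"
    proof -
      have "int (2*k) * (i*(i-1) div 2) = int k * (2 * (i*(i-1) div 2))" by simp
      also have "\<dots> = int k * (i * (i - 1))" by (simp only: even_tri)
      finally show ?thesis by (simp add: power2_eq_square algebra_simps)
    qed
    finally show ?thesis .
  qed
  show ?thesis using J unfolding dv th_def tm .
qed

lemma J_parity:
  fixes q \<epsilon> :: complex and j :: nat
  assumes q1: "norm q < 1" and q0: "q \<noteq> 0" and e: "\<epsilon>^2 = 1"
  shows "infsum (\<lambda>i. (q^5) powi (i*(i-1) div 2) * (\<epsilon> * q^j) powi i) UNIV
         = th q 10 (2 * int j - 5) + \<epsilon> * q^j * th q 10 (2 * int j + 5)"
proof -
  have e0: "\<epsilon> \<noteq> 0" using e by auto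
  have Q1: "norm (q^5) < 1" using norm_pow_less1[OF q1, of 5] by simp
  have w0: "\<epsilon> * q^j \<noteq> 0" using e0 q0 by simp
  define f where "f i = (q^5) powi (i*(i-1) div 2) * (\<epsilon> * q^j) powi i" for i :: int
  have fs: "f summable_on UNIV"
    using jtp(1)[OF Q1 _ w0] q0 unfolding f_def[abs_def] by (auto intro: abs_summable_summable)
  have epow: "(\<epsilon> * q^j) powi (2*m) = q powi (int j * (2*m))" for m :: int
  proof -
    have "(\<epsilon> * q^j) powi (2*m) = ((\<epsilon> * q^j) powi 2) powi m" by (simp only: power_int_mult)
    also have "(\<epsilon> * q^j) powi 2 = q ^ (j * 2)" using e by (simp add: power_mult_distrib power_mult)
    also have "(q ^ (j * 2)) powi m = q powi (int j * (2*m))" by (simp add: power_int_power algebra_simps)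
    finally show ?thesis .
  qed
  have ev: "f (2*m) = q powi (10 * m^2 + (2 * int j - 5) * m)" for m
  proof -
    have d: "(2*m) * (2*m - 1) div 2 = m * (2*m - 1)" by simp
    have "(\<epsilon> * q^j) powi (2*m) = q powi (int j * (2*m))" by (rule epow)
    moreover have "(q^5) powi (m * (2*m - 1)) = q powi (5 * (m * (2*m - 1)))"
      by (simp add: power_int_power)
    ultimately have "f (2*m) = q powi (5 * (m * (2*m - 1))) * q powi (int j * (2*m))"
      unfolding f_def d by simp
    also have "\<dots> = q powi (5 * (m * (2*m - 1)) + int j * (2*m))" by (rule pmul[OF q0])
    also have "5 * (m * (2*m - 1)) + int j * (2*m) = 10 * m^2 + (2 * int j - 5) * m"
      by (simp add: power2_eq_square algebra_simps)
    finally show ?thesis .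
  qed
  have od: "f (2*m+1) = \<epsilon> * q^j * q powi (10 * m^2 + (2 * int j + 5) * m)" for m
  proof -
    have d: "(2*m+1) * (2*m+1 - 1) div 2 = m * (2*m + 1)" by simp
    have "(\<epsilon> * q^j) powi (2*m+1) = (\<epsilon> * q^j) powi (2*m) * (\<epsilon> * q^j)"
      using w0 by (simp add: power_int_add)
    also have "(\<epsilon> * q^j) powi (2*m) = q powi (int j * (2*m))" by (rule epow)
    finally have "(\<epsilon> * q^j) powi (2*m+1) = q powi (int j * (2*m)) * (\<epsilon> * q^j)" .
    moreover have "(q^5) powi (m * (2*m + 1)) = q powi (5 * (m * (2*m + 1)))"
      by (simp add: power_int_power)
    ultimately have "f (2*m+1) = \<epsilon> * q^j * (q powi (5 * (m * (2*m + 1))) * q powi (int j * (2*m)))"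
      unfolding f_def d by (simp add: mult_ac)
    also have "q powi (5 * (m * (2*m + 1))) * q powi (int j * (2*m)) = q powi (5 * (m * (2*m + 1)) + int j * (2*m))"
      by (rule pmul[OF q0])
    also have "5 * (m * (2*m + 1)) + int j * (2*m) = 10 * m^2 + (2 * int j + 5) * m"
      by (simp add: power2_eq_square algebra_simps)
    finally show ?thesis .
  qed
  have "infsum f UNIV = infsum (\<lambda>m. f (2*m)) UNIV + infsum (\<lambda>m. f (2*m+1)) UNIV"
    by (rule infsum_parity[OF fs])
  also have "infsum (\<lambda>m. f (2*m)) UNIV = th q 10 (2 * int j - 5)"
    unfolding ev th_def by simp
  also have "infsum (\<lambda>m. f (2*m+1)) UNIV = \<epsilon> * q^j * th q 10 (2 * int j + 5)"
    unfolding od th_def by (rule infsum_cmult_right')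
  finally show ?thesis unfolding f_def .
qed

lemma final_alg:
  fixes q t7 t9 b d F1 F2 F3 F4 F5 :: complex
  assumes b0: "b \<noteq> 0" and d0: "d \<noteq> 0"
    and R1: "F1 * F2 = t7 * d + q * b * t9"
    and R2: "F3 * F4 = b * d + q^3 * t7 * t9"
    and R3: "F2 * F5 = b * b + q^2 * t7 * t7"
    and R4: "F4 * F5 = d * d + q^4 * t9 * t9"
    and R5: "t7 * b * F1 = t9 * d * F3"
  shows "(q*t7/b) * ((q*t7/b) + (q^2*t9/d)) * (1 + (q^2*t9/d)^2)
       = (q^2*t9/d) * (1 + (q*t7/b) * (q^2*t9/d)) * (1 + (q*t7/b)^2)"
proof -
  have key: "(q*t7) * b * ((q*t7) * d + b * (q^2*t9)) * ((q^2*t9)^2 + d^2)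
           = (q^2*t9) * d * (b * d + (q*t7) * (q^2*t9)) * ((q*t7)^2 + b^2)"
  proof -
    have "(q*t7) * b * ((q*t7) * d + b * (q^2*t9)) * ((q^2*t9)^2 + d^2)
        = q^2 * (t7 * b * F1) * F2 * (F4 * F5)"
      using R1 R4 by algebra
    also have "\<dots> = q^2 * (t9 * d * F3) * F2 * (F4 * F5)" by (simp only: R5)
    also have "\<dots> = (q^2*t9) * d * (b * d + (q*t7) * (q^2*t9)) * ((q*t7)^2 + b^2)"
      using R2 R3 by algebra
    finally show ?thesis .
  qed
  show ?thesis using b0 d0 key by (simp add: divide_simps) algebra
qed

lemma qsplit:
  fixes q :: complex assumes q1: "norm q < 1" and k: "k \<ge> 1"
  shows "qpoch (-(q^a)) (q^k) = qpoch (-(q^a)) (q^(2*k)) * qpoch (-(q^(a+k))) (q^(2*k))"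
proof -
  have "qpoch (-(q^a)) (q^k) = qpoch (-(q^a)) ((q^k)^2) * qpoch (-(q^a) * q^k) ((q^k)^2)"
    by (rule qpoch_split[OF norm_pow_less1[OF q1 k]])
  also have "(q^k)^2 = q^(2*k)" by (simp add: power_mult[symmetric] mult.commute)
  also have "-(q^a) * q^k = -(q^(a+k))" by (simp add: power_add)
  finally show ?thesis .
qed

lemma R5:
  fixes q :: complex assumes q1: "norm q < 1" and q0: "q \<noteq> 0"
  shows "th q 10 7 * th q 10 3 * th q 5 4 = th q 10 9 * th q 10 1 * th q 5 2"
proof -
  have j7: "th q 10 7 = qpoch (-(q^17)) (q^20) * qpoch (-(q^3)) (q^20) * qpoch (q^20) (q^20)"
    using th_jtp[OF q1 q0, of 10 7] by simp
  have j3: "th q 10 3 = qpoch (-(q^13)) (q^20) * qpoch (-(q^7)) (q^20) * qpoch (q^20) (q^20)"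
    using th_jtp[OF q1 q0, of 10 3] by simp
  have j9: "th q 10 9 = qpoch (-(q^19)) (q^20) * qpoch (-q) (q^20) * qpoch (q^20) (q^20)"
    using th_jtp[OF q1 q0, of 10 9] by simp
  have j1: "th q 10 1 = qpoch (-(q^11)) (q^20) * qpoch (-(q^9)) (q^20) * qpoch (q^20) (q^20)"
    using th_jtp[OF q1 q0, of 10 1] by simp
  have j4: "th q 5 4 = qpoch (-(q^9)) (q^10) * qpoch (-q) (q^10) * qpoch (q^10) (q^10)"
    using th_jtp[OF q1 q0, of 5 4] by simp
  have j2: "th q 5 2 = qpoch (-(q^7)) (q^10) * qpoch (-(q^3)) (q^10) * qpoch (q^10) (q^10)"
    using th_jtp[OF q1 q0, of 5 2] by simp
  have s9: "qpoch (-(q^9)) (q^10) = qpoch (-(q^9)) (q^20) * qpoch (-(q^19)) (q^20)"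
    using qsplit[OF q1, of 10 9] by simp
  have s1: "qpoch (-q) (q^10) = qpoch (-q) (q^20) * qpoch (-(q^11)) (q^20)"
    using qsplit[OF q1, of 10 1] by simp
  have s7: "qpoch (-(q^7)) (q^10) = qpoch (-(q^7)) (q^20) * qpoch (-(q^17)) (q^20)"
    using qsplit[OF q1, of 10 7] by simp
  have s3: "qpoch (-(q^3)) (q^10) = qpoch (-(q^3)) (q^20) * qpoch (-(q^13)) (q^20)"
    using qsplit[OF q1, of 10 3] by simp
  show ?thesis unfolding j7 j3 j9 j1 j4 j2 s9 s1 s7 s3 by (simp only: mult_ac)
qed

lemma nome_props:
  assumes "Im \<tau> > 0"
  shows "norm (nome \<tau>) < 1" "nome \<tau> \<noteq> 0"
proof -
  have "norm (nome \<tau>) = exp (- 2 * pi * Im \<tau>)" by (simp add: nome_def norm_exp_eq_Re)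
  also have "\<dots> < 1" using assms by simp
  finally show "norm (nome \<tau>) < 1" .
  show "nome \<tau> \<noteq> 0" by (simp add: nome_def)
qed

theorem corollary3p9:
  fixes \<tau> :: complex
  assumes "Im \<tau> > 0" and "T1den \<tau> \<noteq> 0" and "T2den \<tau> \<noteq> 0"
  shows "T1 \<tau> * (T1 \<tau> + T2 \<tau>) * (1 + (T2 \<tau>)\<^sup>2) = T2 \<tau> * (1 + T1 \<tau> * T2 \<tau>) * (1 + (T1 \<tau>)\<^sup>2)"
proof -
  define q where "q = nome \<tau>"
  have q1: "norm q < 1" and q0: "q \<noteq> 0" using nome_props[OF assms(1)] by (auto simp: q_def)
  have Q1: "norm (q^5) < 1" using norm_pow_less1[OF q1, of 5] by simp
  have Q0: "q^5 \<noteq> 0" using q0 by simp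
  define E5 where "E5 = qpoch (q^5) (q^5)"
  have E0: "E5 \<noteq> 0" unfolding E5_def by (rule qpochQQ_nz[OF Q1])
  define A where "A = qpoch (-q) (q^5) * qpoch (-(q^4)) (q^5)"
  define B where "B = qpoch q (q^5) * qpoch (q^4) (q^5)"
  define C where "C = qpoch (-(q^2)) (q^5) * qpoch (-(q^3)) (q^5)"
  define D where "D = qpoch (q^2) (q^5) * qpoch (q^3) (q^5)"
  define t7 where "t7 = th q 10 7"
  define t9 where "t9 = th q 10 9"
  define b where "b = th q 10 3"
  define d where "d = th q 10 1"
  have d1: "q^5 / q = q^4" and d2: "q^5 / (-q) = -(q^4)" and d3: "q^5 / q^2 = q^3" and d4: "q^5 / (-(q^2)) = -(q^3)"
    using q0 by (simp_all add: eval_nat_numeral field_simps)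
  have hA: "A * E5 = b + q * t7"
    using jtp(2)[OF Q1 Q0, of q] J_parity[OF q1 q0, of 1 1] q0 d1
    by (simp add: A_def E5_def b_def t7_def th_neg)
  have hB: "B * E5 = b - q * t7"
    using jtp(2)[OF Q1 Q0, of "-q"] J_parity[OF q1 q0, of "-1" 1] q0 d2
    by (simp add: B_def E5_def b_def t7_def th_neg)
  have hC: "C * E5 = d + q^2 * t9"
    using jtp(2)[OF Q1 Q0, of "q^2"] J_parity[OF q1 q0, of 1 2] q0 d3
    by (simp add: C_def E5_def d_def t9_def th_neg)
  have hD: "D * E5 = d - q^2 * t9"
    using jtp(2)[OF Q1 Q0, of "-(q^2)"] J_parity[OF q1 q0, of "-1" 2] q0 d4
    by (simp add: D_def E5_def d_def t9_def th_neg)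
  have T1e: "T1 \<tau> = (A - B) / (A + B)"
    by (simp add: T1_def T1num_def T1den_def Let_def A_def B_def q_def)
  have T2e: "T2 \<tau> = (C - D) / (C + D)"
    by (simp add: T2_def T2num_def T2den_def Let_def C_def D_def q_def)
  have AB0: "A + B \<noteq> 0" using assms(2) by (simp add: T1den_def Let_def A_def B_def q_def)
  have CD0: "C + D \<noteq> 0" using assms(3) by (simp add: T2den_def Let_def C_def D_def q_def)
  have ABE: "(A + B) * E5 = 2 * b" "(A - B) * E5 = 2 * (q * t7)"
    using hA hB by (simp_all add: algebra_simps)
  have CDE: "(C + D) * E5 = 2 * d" "(C - D) * E5 = 2 * (q^2 * t9)"
    using hC hD by (simp_all add: algebra_simps)
  have b0: "b \<noteq> 0" using ABE(1) AB0 E0 by auto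
  have d0: "d \<noteq> 0" using CDE(1) CD0 E0 by auto
  have T1v: "T1 \<tau> = q * t7 / b"
  proof -
    have "T1 \<tau> = ((A - B) * E5) / ((A + B) * E5)" using E0 by (simp add: T1e)
    then show ?thesis unfolding ABE by simp
  qed
  have T2v: "T2 \<tau> = q^2 * t9 / d"
  proof -
    have "T2 \<tau> = ((C - D) * E5) / ((C + D) * E5)" using E0 by (simp add: T2e)
    then show ?thesis unfolding CDE by simp
  qed
  have R1: "th q 5 4 * th q 5 3 = t7 * d + q * b * t9"
    using lemS[OF q1 q0, of "-4" "-3"] by (simp add: th_neg t7_def t9_def b_def d_def mult_ac)
  have R2: "th q 5 2 * th q 5 1 = b * d + q^3 * t7 * t9"
    using lemS[OF q1 q0, of "-2" "-1"] by (simp add: th_neg t7_def t9_def b_def d_def mult_ac)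
  have R3: "th q 5 3 * th q 5 0 = b * b + q^2 * t7 * t7"
    using lemS[OF q1 q0, of "-3" 0] by (simp add: th_neg t7_def t9_def b_def d_def mult_ac)
  have R4: "th q 5 1 * th q 5 0 = d * d + q^4 * t9 * t9"
    using lemS[OF q1 q0, of "-1" 0] by (simp add: th_neg t7_def t9_def b_def d_def mult_ac)
  have R5': "t7 * b * th q 5 4 = t9 * d * th q 5 2"
    using R5[OF q1 q0] by (simp add: t7_def t9_def b_def d_def)
  show ?thesis unfolding T1v T2v
    by (rule final_alg[OF b0 d0 R1 R2 R3 R4 R5'])
qed

end
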